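(* There exists a graded $\mathbb{R}$-algebra isomorphism $$H^*(BSO(8);\mathbb{R})\cong \mathbb{R}[a,b,c,d]$$ which intertwines the triality automorphism on $H^*(BSO(8);\mathbb{R})$ with the triality action on $\mathbb{R}[a,b,c,d]$, where the grading on $H^*(BSO(8);\mathbb{R})$ is the cohomological degree divided by $4$ and the grading on $\mathbb{R}[a,b,c,d]$ is $\deg a=1$, $\deg b=\deg c=2$, $\deg d=3$.
   Context: $a,b,c,d$ are the parameters of the miniversal deformation $F(x,y,a,b,c,d)=x^3-3xy^2+a(x^2+y^2)+bx+cy+d$ of the singularity $x^3-3xy^2$ (type $D_4^-$); with the stated degrees $F$ is quasihomogeneous. The triality acts on $\mathbb{R}[a,b,c,d]$ by the algebra automorphism fixing $a$ and $d$ and acting on the span of $b,c$ by the rotation by $120^\circ$ (induced from $(a,b,c,d)\mapsto(a,\phi_0(b,c),d)$, $\phi_0$ the rotation by $120^\circ$). On $H^*(BSO(8);\mathbb{R})=\mathbb{R}[p_1,p_2,p_3,e]=\mathbb{R}[L_1,\dots,L_4]^W$ ($W$ the Weyl group of $D_4$, $\deg L_i=2$, $p_i=\sigma_i(L_1^2,\dots,L_4^2)$, $e=L_1L_2L_3L_4$) the triality automorphism is the algebra automorphism with $\phi(L_1)=\tfrac12(L_1+L_2+L_3+L_4)$, $\phi(L_2)=\tfrac12(L_1+L_2-L_3-L_4)$, $\phi(L_3)=\tfrac12(L_1-L_2+L_3-L_4)$, $\phi(L_4)=\tfrac12(-L_1+L_2+L_3-L_4)$. *)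

theory Defs
  imports Complex_Main "HOL-Library.Poly_Mapping" "HOL-Combinatorics.Permutations"
begin

(* Real polynomials in the variables X_0, X_1, ... : finitely supported maps from
monomials (exponent vectors nat =>0 nat) to real coefficients, with the
convolution product of HOL-Library.Poly_Mapping. *)

type_synonym rpoly = "(nat \<Rightarrow>\<^sub>0 nat) \<Rightarrow>\<^sub>0 real"

definition Const :: "real \<Rightarrow> rpoly" where
  "Const c = Poly_Mapping.single 0 c"

definition Var :: "nat \<Rightarrow> rpoly" where
  "Var i = Poly_Mapping.single (Poly_Mapping.single i 1) 1"

definition vars :: "rpoly \<Rightarrow> nat set" where
  "vars p = \<Union> (Poly_Mapping.keys ` Poly_Mapping.keys p)"

definition poly4 :: "rpoly set" where
  "poly4 = {p. vars p \<subseteq> {0..<4}}"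

definition subst :: "(nat \<Rightarrow> rpoly) \<Rightarrow> rpoly \<Rightarrow> rpoly" where
  "subst s p = (\<Sum>m\<in>Poly_Mapping.keys p.
       Const (Poly_Mapping.lookup p m) *
       (\<Prod>i\<in>Poly_Mapping.keys m. s i ^ Poly_Mapping.lookup m i))"

(* Homogeneous of ordinary total degree n (zero counts as homogeneous of every degree). *)
definition homog :: "nat \<Rightarrow> rpoly \<Rightarrow> bool" where
  "homog n p \<longleftrightarrow> (\<forall>m\<in>Poly_Mapping.keys p. (\<Sum>i\<in>Poly_Mapping.keys m. Poly_Mapping.lookup m i) = n)"

(* Weighted homogeneity in R[a,b,c,d] = R[X_0,X_1,X_2,X_3], with weights
deg a = 1, deg b = deg c = 2, deg d = 3. *)
definition abcd_weight :: "nat \<Rightarrow> nat" where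
  "abcd_weight i = (if i = 0 then 1 else if i = 3 then 3 else 2)"

definition whomog :: "nat \<Rightarrow> rpoly \<Rightarrow> bool" where
  "whomog k p \<longleftrightarrow> (\<forall>m\<in>Poly_Mapping.keys p.
      (\<Sum>i\<in>Poly_Mapping.keys m. abcd_weight i * Poly_Mapping.lookup m i) = k)"

(* Weyl group W(D_4) acting on R[L_1..L_4] = R[X_0..X_3]: permutations of the L_i
combined with an even number of sign changes. *)
definition weyl_D4_subst :: "(nat \<Rightarrow> nat) \<Rightarrow> (nat \<Rightarrow> real) \<Rightarrow> nat \<Rightarrow> rpoly" where
  "weyl_D4_subst \<pi> \<epsilon> i = (if i < 4 then Const (\<epsilon> i) * Var (\<pi> i) else Var i)"

definition weyl_D4 :: "((nat \<Rightarrow> nat) \<times> (nat \<Rightarrow> real)) set" where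
  "weyl_D4 = {(\<pi>, \<epsilon>). \<pi> permutes {0..<4} \<and> (\<forall>i<4. \<epsilon> i = 1 \<or> \<epsilon> i = -1)
                        \<and> (\<Prod>i<4. \<epsilon> i) = 1}"

(* H^*(BSO(8);R) = R[L_1,...,L_4]^W (L_{i+1} is X_i). *)
definition HBSO8 :: "rpoly set" where
  "HBSO8 = {p \<in> poly4. \<forall>(\<pi>, \<epsilon>)\<in>weyl_D4. subst (weyl_D4_subst \<pi> \<epsilon>) p = p}"

(* Cohomological grading divided by 4: deg L_i = 2, so a homogeneous polynomial of
total degree n in the L_i has cohomological degree 2n, i.e. grading degree k iff n = 2k. *)
definition H_graded :: "nat \<Rightarrow> rpoly \<Rightarrow> bool" where
  "H_graded k p \<longleftrightarrow> homog (2 * k) p"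

definition triality_L :: "nat \<Rightarrow> rpoly" where
  "triality_L i =
    (if i = 0 then Const (1/2) * (Var 0 + Var 1 + Var 2 + Var 3)
     else if i = 1 then Const (1/2) * (Var 0 + Var 1 - Var 2 - Var 3)
     else if i = 2 then Const (1/2) * (Var 0 - Var 1 + Var 2 - Var 3)
     else if i = 3 then Const (1/2) * (- Var 0 + Var 1 + Var 2 - Var 3)
     else Var i)"

definition triality_H :: "rpoly \<Rightarrow> rpoly" where
  "triality_H = subst triality_L"

(* Triality on R[a,b,c,d] (a = X_0, b = X_1, c = X_2, d = X_3): fixes a, d and
rotates span{b,c} by 120 degrees: b to cos t b + sin t c, c to -sin t b + cos t c. *)
definition triality_abcd_var :: "nat \<Rightarrow> rpoly" where
  "triality_abcd_var i =
    (if i = 1 then Const (cos (2*pi/3)) * Var 1 + Const (sin (2*pi/3)) * Var 2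
     else if i = 2 then Const (- sin (2*pi/3)) * Var 1 + Const (cos (2*pi/3)) * Var 2
     else Var i)"

definition triality_abcd :: "rpoly \<Rightarrow> rpoly" where
  "triality_abcd = subst triality_abcd_var"

end

theory Submission
  imports Defs "HOL-Library.Product_Lexorder"
begin


abbreviation lk :: "('a \<Rightarrow>\<^sub>0 'b::zero) \<Rightarrow> 'a \<Rightarrow> 'b" where "lk \<equiv> Poly_Mapping.lookup"
abbreviation ks :: "('a \<Rightarrow>\<^sub>0 'b::zero) \<Rightarrow> 'a set" where "ks \<equiv> Poly_Mapping.keys"
abbreviation sng :: "'a \<Rightarrow> 'b \<Rightarrow> ('a \<Rightarrow>\<^sub>0 'b::zero)" where "sng \<equiv> Poly_Mapping.single"

lemma pm_sum_monos: "p = (\<Sum>m\<in>ks p. sng m (lk p m))"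
  by (rule poly_mapping_eqI) (simp add: lookup_sum lookup_single when_def in_keys_iff)

definition mn :: "(nat \<Rightarrow> rpoly) \<Rightarrow> (nat \<Rightarrow>\<^sub>0 nat) \<Rightarrow> rpoly" where
  "mn s m = (\<Prod>i\<in>ks m. s i ^ lk m i)"

lemma subst_mono: "subst s p = (\<Sum>m\<in>ks p. Const (lk p m) * mn s m)"
  by (simp add: subst_def mn_def)

lemma Const_0[simp]: "Const 0 = 0" by (simp add: Const_def)
lemma Const_1[simp]: "Const 1 = 1" by (simp add: Const_def)
lemma Const_add: "Const (a + b) = Const a + Const b" by (simp add: Const_def single_add)
lemma Const_mult: "Const (a * b) = Const a * Const b" by (simp add: Const_def mult_single)
lemma Const_minus: "Const (- a) = - Const a" by (simp add: Const_def single_uminus)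
lemma Const_diff: "Const (a - b) = Const a - Const b" by (simp add: Const_def single_diff)
lemma Const_power: "Const (a ^ n) = Const a ^ n"
  by (induct n) (simp_all add: Const_mult)
lemma Const_numeral[simp]: "Const (numeral n) = numeral n" by (simp add: Const_def)

lemma subst_superset:
  assumes "finite S" "ks p \<subseteq> S"
  shows "subst s p = (\<Sum>m\<in>S. Const (lk p m) * mn s m)"
  unfolding subst_mono
  by (rule sum.mono_neutral_left) (use assms in \<open>auto simp: in_keys_iff\<close>)

lemma subst_add: "subst s (p + q) = subst s p + subst s q"
proof -
  let ?S = "ks p \<union> ks q"
  have "subst s (p + q) = (\<Sum>m\<in>?S. Const (lk (p+q) m) * mn s m)"
    by (rule subst_superset) (auto dest: subsetD[OF keys_add])
  also have "\<dots> = (\<Sum>m\<in>?S. Const (lk p m) * mn s m) + (\<Sum>m\<in>?S. Const (lk q m) * mn s m)"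
    by (simp add: lookup_add Const_add distrib_right sum.distrib)
  also have "\<dots> = subst s p + subst s q"
    by (simp add: subst_superset[symmetric])
  finally show ?thesis .
qed

lemma subst_zero[simp]: "subst s 0 = 0" by (simp add: subst_def)

lemma subst_sum: "subst s (sum f A) = (\<Sum>a\<in>A. subst s (f a))"
  by (induct A rule: infinite_finite_induct) (simp_all add: subst_add)

lemma subst_single: "subst s (sng m c) = Const c * mn s m"
  by (cases "c = 0") (simp_all add: subst_mono)

lemma mono_superset:
  assumes "finite S" "ks m \<subseteq> S"
  shows "mn s m = (\<Prod>i\<in>S. s i ^ lk m i)"
  unfolding mn_def
  by (rule prod.mono_neutral_left) (use assms in \<open>auto simp: in_keys_iff\<close>)

lemma mono_add: "mn s (m + m') = mn s m * mn s m'"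
proof -
  let ?S = "ks m \<union> ks m'"
  have "mn s (m + m') = (\<Prod>i\<in>?S. s i ^ lk (m+m') i)"
    by (rule mono_superset) (auto dest: subsetD[OF keys_add])
  also have "\<dots> = (\<Prod>i\<in>?S. s i ^ lk m i) * (\<Prod>i\<in>?S. s i ^ lk m' i)"
    by (simp add: lookup_add power_add prod.distrib)
  also have "\<dots> = mn s m * mn s m'"
    by (simp add: mono_superset[symmetric])
  finally show ?thesis .
qed

lemma mult_expand:
  "p * q = (\<Sum>l\<in>ks p. \<Sum>r\<in>ks q. sng (l + r) (lk p l * lk q r))"
proof -
  have "p * q = (\<Sum>l\<in>ks p. sng l (lk p l)) * (\<Sum>r\<in>ks q. sng r (lk q r))"
    using pm_sum_monos[of p] pm_sum_monos[of q] by simp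
  also have "\<dots> = (\<Sum>l\<in>ks p. \<Sum>r\<in>ks q. sng (l + r) (lk p l * lk q r))"
    by (simp add: sum_product mult_single)
  finally show ?thesis .
qed

lemma subst_mult: "subst s (p * q) = subst s p * subst s q"
proof -
  have "subst s (p * q) = (\<Sum>l\<in>ks p. \<Sum>r\<in>ks q. Const (lk p l) * mn s l * (Const (lk q r) * mn s r))"
    by (subst mult_expand) (simp add: subst_sum subst_single mono_add Const_mult mult_ac)
  also have "\<dots> = subst s p * subst s q"
    by (simp add: subst_mono sum_product)
  finally show ?thesis .
qed

lemma subst_Const[simp]: "subst s (Const c) = Const c"
  by (simp add: Const_def subst_single mn_def)

lemma subst_one[simp]: "subst s 1 = 1"
  using subst_Const[of s 1] by simp

lemma subst_Var[simp]: "subst s (Var i) = s i"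
  by (simp add: Var_def subst_single mn_def)

lemma subst_power: "subst s (p ^ n) = subst s p ^ n"
  by (induct n) (simp_all add: subst_mult)

lemma subst_prod: "subst s (prod f A) = (\<Prod>a\<in>A. subst s (f a))"
  by (induct A rule: infinite_finite_induct) (simp_all add: subst_mult)

lemma subst_uminus: "subst s (- p) = - subst s p"
proof -
  have "subst s (- p) + subst s p = 0" by (simp add: subst_add[symmetric])
  then show ?thesis by (simp add: eq_neg_iff_add_eq_0)
qed

lemma subst_diff: "subst s (p - q) = subst s p - subst s q"
  unfolding diff_conv_add_uminus by (simp only: subst_add subst_uminus)

lemma subst_numeral[simp]: "subst s (numeral n) = numeral n"
  using subst_Const[of s "numeral n"] by simp

lemmas subst_simps = subst_add subst_mult subst_power subst_diff subst_uminus subst_sum subst_prod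

lemma subst_comp: "subst t (subst s p) = subst (\<lambda>i. subst t (s i)) p"
  unfolding subst_mono[of s p] subst_mono[of "\<lambda>i. subst t (s i)" p]
  by (simp add: subst_sum subst_mult subst_prod subst_power mn_def)



definition pmap :: "(nat \<Rightarrow> nat) \<Rightarrow> (nat \<Rightarrow>\<^sub>0 nat) \<Rightarrow> (nat \<Rightarrow>\<^sub>0 nat)" where
  "pmap \<pi> m = (\<Sum>i\<in>ks m. sng (\<pi> i) (lk m i))"

lemma CV_single: "Const e * Var j = sng (sng j 1) e"
  by (simp add: Const_def Var_def mult_single)

lemma CV_power: "(Const e * Var j) ^ k = sng (sng j k) (e ^ k)"
proof (induct k)
  case 0 then show ?case by simp
next
  case (Suc k)
  have "sng j 1 + sng j k = sng j (Suc k)" by (simp add: single_add[symmetric])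
  then show ?case using Suc by (simp add: CV_single mult_single)
qed

lemma prod_signed:
  "finite S \<Longrightarrow> (\<Prod>i\<in>S. (Const (\<epsilon> i) * Var (\<pi> i)) ^ (lk m i)) =
     sng (\<Sum>i\<in>S. sng (\<pi> i) (lk m i)) (\<Prod>i\<in>S. \<epsilon> i ^ lk m i)"
  by (induct S rule: finite_induct) (simp_all add: CV_power mult_single)

lemma subst_signed:
  "subst (\<lambda>i. Const (\<epsilon> i) * Var (\<pi> i)) p =
     (\<Sum>m\<in>ks p. sng (pmap \<pi> m) (lk p m * (\<Prod>i\<in>ks m. \<epsilon> i ^ lk m i)))"
  unfolding subst_mono mn_def prod_signed[OF finite_keys] by (simp add: pmap_def Const_def mult_single)

lemma lk_pmap: "inj \<pi> \<Longrightarrow> lk (pmap \<pi> m) (\<pi> j) = lk m j"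
  by (simp add: pmap_def lookup_sum lookup_single when_def inj_eq in_keys_iff)

lemma pmap_inj: "inj \<pi> \<Longrightarrow> pmap \<pi> m = pmap \<pi> m' \<Longrightarrow> m = m'"
  by (rule poly_mapping_eqI) (metis lk_pmap)

lemma lk_subst_signed:
  assumes "inj \<pi>"
  shows "lk (subst (\<lambda>i. Const (\<epsilon> i) * Var (\<pi> i)) p) (pmap \<pi> m) = lk p m * (\<Prod>i\<in>ks m. \<epsilon> i ^ lk m i)"
proof -
  have "lk (subst (\<lambda>i. Const (\<epsilon> i) * Var (\<pi> i)) p) (pmap \<pi> m) =
     (\<Sum>m'\<in>ks p. if m' = m then lk p m' * (\<Prod>i\<in>ks m'. \<epsilon> i ^ lk m' i) else 0)"
    unfolding subst_signed lookup_sum lookup_single when_def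
    using pmap_inj[OF assms] by (intro sum.cong) auto
  also have "\<dots> = lk p m * (\<Prod>i\<in>ks m. \<epsilon> i ^ lk m i)"
    by (simp add: in_keys_iff)
  finally show ?thesis .
qed

lemma pmap_id: "pmap (\<lambda>i. i) m = m"
  unfolding pmap_def by (rule pm_sum_monos[symmetric])

lemma lk_subst_scale:
  "lk (subst (\<lambda>i. Const (w i) * Var i) p) m = lk p m * (\<Prod>i\<in>ks m. w i ^ lk m i)"
  using lk_subst_signed[of "\<lambda>i. i" w p m] by (simp add: pmap_id)

lemma subst_Var_id: "subst Var p = p"
proof (rule poly_mapping_eqI)
  fix m
  have "subst Var p = subst (\<lambda>i. Const 1 * Var i) p" by simp
  then show "lk (subst Var p) m = lk p m"
    using lk_subst_scale[of "\<lambda>i. 1" p m] by simp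
qed

lemma lk_Const_mult: "lk (Const c * p) m = c * lk p m"
proof -
  have "Const c * p = (\<Sum>m'\<in>ks p. sng m' (c * lk p m'))"
    by (subst pm_sum_monos[of p]) (simp add: sum_distrib_left Const_def mult_single)
  then show ?thesis
    by (simp add: lookup_sum lookup_single when_def in_keys_iff)
qed

definition dscale :: "rpoly \<Rightarrow> rpoly" where
  "dscale = subst (\<lambda>i. Const 2 * Var i)"

definition wscale :: "rpoly \<Rightarrow> rpoly" where
  "wscale = subst (\<lambda>i. Const (4 ^ abcd_weight i) * Var i)"

lemma homog_iff: "homog n p \<longleftrightarrow> dscale p = Const (2 ^ n) * p"
proof -
  have "dscale p = Const (2 ^ n) * p \<longleftrightarrow> (\<forall>m. lk p m * 2 ^ (\<Sum>i\<in>ks m. lk m i) = 2 ^ n * lk p m)"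
    by (simp del: Const_numeral add: poly_mapping_eq_iff fun_eq_iff dscale_def lk_subst_scale lk_Const_mult power_sum)
  also have "\<dots> \<longleftrightarrow> homog n p"
    unfolding homog_def by (auto simp: in_keys_iff)
  finally show ?thesis by simp
qed

lemma whomog_iff: "whomog k p \<longleftrightarrow> wscale p = Const (4 ^ k) * p"
proof -
  have "wscale p = Const (4 ^ k) * p \<longleftrightarrow> (\<forall>m. lk p m * 4 ^ (\<Sum>i\<in>ks m. abcd_weight i * lk m i) = 4 ^ k * lk p m)"
    by (simp add: poly_mapping_eq_iff fun_eq_iff wscale_def lk_subst_scale lk_Const_mult power_sum power_mult)
  also have "\<dots> \<longleftrightarrow> whomog k p"
    unfolding whomog_def by (auto simp: in_keys_iff)
  finally show ?thesis by simp
qed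



lemma poly4_iff: "p \<in> poly4 \<longleftrightarrow> (\<forall>m\<in>ks p. ks m \<subseteq> {0..<4})"
  by (auto simp: poly4_def vars_def)

lemma keys_uminus': "ks (- p) = ks p" by (auto simp: in_keys_iff)
lemma keys_diff': "ks (p - q) \<subseteq> ks p \<union> ks q" by (auto simp: in_keys_iff lookup_minus)
lemma keys_mult': "m \<in> ks (p * q) \<Longrightarrow> \<exists>l\<in>ks p. \<exists>r\<in>ks q. m = l + r"
  using keys_mult[of p q] by blast

lemma poly4_Const[simp]: "Const c \<in> poly4" unfolding poly4_iff Const_def by simp
lemma poly4_zero[simp]: "0 \<in> poly4" using poly4_Const[of 0] by simp
lemma poly4_one[simp]: "1 \<in> poly4" using poly4_Const[of 1] by simp
lemma poly4_Var[simp]: "i < 4 \<Longrightarrow> Var i \<in> poly4" unfolding poly4_iff Var_def by simp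
lemma poly4_add[simp]: "p \<in> poly4 \<Longrightarrow> q \<in> poly4 \<Longrightarrow> p + q \<in> poly4"
  unfolding poly4_iff by (meson UnE keys_add subsetD)
lemma poly4_uminus[simp]: "p \<in> poly4 \<Longrightarrow> - p \<in> poly4"
  unfolding poly4_iff keys_uminus' by simp
lemma poly4_diff[simp]: "p \<in> poly4 \<Longrightarrow> q \<in> poly4 \<Longrightarrow> p - q \<in> poly4"
  unfolding poly4_iff by (meson UnE keys_diff' subsetD)
lemma poly4_mult[simp]: "p \<in> poly4 \<Longrightarrow> q \<in> poly4 \<Longrightarrow> p * q \<in> poly4"
  unfolding poly4_iff
proof
  fix m assume A: "\<forall>m\<in>ks p. ks m \<subseteq> {0..<4}" "\<forall>m\<in>ks q. ks m \<subseteq> {0..<4}" and m: "m \<in> ks (p * q)"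
  from keys_mult'[OF m] obtain l r where "l \<in> ks p" "r \<in> ks q" "m = l + r" by blast
  with A have "ks l \<subseteq> {0..<4}" "ks r \<subseteq> {0..<4}" "ks m \<subseteq> ks l \<union> ks r" by (auto simp: keys_add)
  then show "ks m \<subseteq> {0..<4}" by blast
qed
lemma poly4_power[simp]: "p \<in> poly4 \<Longrightarrow> p ^ n \<in> poly4"
  by (induct n) simp_all
lemma poly4_sum: "(\<And>a. a \<in> A \<Longrightarrow> f a \<in> poly4) \<Longrightarrow> sum f A \<in> poly4"
  by (induct A rule: infinite_finite_induct) simp_all
lemma poly4_prod: "(\<And>a. a \<in> A \<Longrightarrow> f a \<in> poly4) \<Longrightarrow> prod f A \<in> poly4"
  by (induct A rule: infinite_finite_induct) simp_all
lemma poly4_numeral[simp]: "numeral n \<in> poly4"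
  using poly4_Const[of "numeral n"] by simp

lemma subst_poly4:
  assumes "\<And>i. i \<in> vars p \<Longrightarrow> s i \<in> poly4"
  shows "subst s p \<in> poly4"
  unfolding subst_mono mn_def
  by (intro poly4_sum poly4_mult poly4_Const poly4_prod poly4_power assms) (auto simp: vars_def)

lemma vars_poly4: "p \<in> poly4 \<Longrightarrow> i \<in> vars p \<Longrightarrow> i < 4"
  by (auto simp: poly4_def)

definition kap :: "(nat \<Rightarrow>\<^sub>0 nat) \<Rightarrow> nat \<times> nat \<times> nat \<times> nat" where
  "kap m = (lk m 0, lk m 1, lk m 2, lk m 3)"

definition mu :: "nat \<times> nat \<times> nat \<times> nat \<Rightarrow> (nat \<Rightarrow>\<^sub>0 nat)" where
  "mu t = (case t of (a, b, c, d) \<Rightarrow> sng 0 a + sng 1 b + sng 2 c + sng 3 d)"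

lemma kap_mu[simp]: "kap (mu t) = t"
  by (cases t) (simp add: kap_def mu_def lookup_add lookup_single)

lemma mu_kap: assumes "ks m \<subseteq> {0..<4}" shows "mu (kap m) = m"
proof (rule poly_mapping_eqI)
  fix i
  show "lk (mu (kap m)) i = lk m i"
  proof (cases "i < 4")
    case True
    then have "i = 0 \<or> i = 1 \<or> i = 2 \<or> i = 3" by auto
    then show ?thesis by (auto simp: kap_def mu_def lookup_add lookup_single)
  next
    case False
    then have "lk m i = 0" using assms by (auto simp: in_keys_iff)
    then show ?thesis using False by (simp add: kap_def mu_def lookup_add lookup_single when_def)
  qed
qed

lemma kap_add: "kap (m + m') = (case kap m of (a0,a1,a2,a3) \<Rightarrow> case kap m' of (b0,b1,b2,b3) \<Rightarrow> (a0+b0,a1+b1,a2+b2,a3+b3))"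
  by (simp add: kap_def lookup_add)

lemma mu_add: "mu (a0,a1,a2,a3) + mu (b0,b1,b2,b3) = mu (a0+b0,a1+b1,a2+b2,a3+b3)"
  by (simp add: mu_def single_add ac_simps)

lemma lex_add_le:
  fixes x0 x1 x2 x3 a0 a1 a2 a3 y0 y1 y2 y3 b0 b1 b2 b3 :: nat
  assumes "(x0,x1,x2,x3) \<le> (a0,a1,a2,a3)" "(y0,y1,y2,y3) \<le> (b0,b1,b2,b3)"
  shows "(x0+y0,x1+y1,x2+y2,x3+y3) \<le> (a0+b0,a1+b1,a2+b2,a3+b3)"
  using assms by (auto simp: less_eq_prod_simp less_prod_simp)

lemma lex_add_eq:
  fixes x0 x1 x2 x3 a0 a1 a2 a3 y0 y1 y2 y3 b0 b1 b2 b3 :: nat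
  assumes "(x0,x1,x2,x3) \<le> (a0,a1,a2,a3)" "(y0,y1,y2,y3) \<le> (b0,b1,b2,b3)"
    "(x0+y0,x1+y1,x2+y2,x3+y3) = (a0+b0,a1+b1,a2+b2,a3+b3)"
  shows "(x0,x1,x2,x3) = (a0,a1,a2,a3) \<and> (y0,y1,y2,y3) = (b0,b1,b2,b3)"
  using assms by (auto simp: less_eq_prod_simp less_prod_simp)

lemma double_delta:
  assumes S: "finite S" and T: "finite T"
  shows "(\<Sum>l\<in>S. \<Sum>r\<in>T. if l = a \<and> r = b then f l r else (0::real)) = (if a \<in> S \<and> b \<in> T then f a b else 0)"
proof -
  have e: "\<And>l r. (if l = a \<and> r = b then f l r else (0::real)) = (if r = b then (if l = a then f l r else 0) else 0)"
    by auto
  have "\<And>l. (\<Sum>r\<in>T. if l = a \<and> r = b then f l r else (0::real)) = (if b \<in> T then (if l = a then f l b else 0) else 0)"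
    by (simp only: e sum.delta[OF T])
  then have "(\<Sum>l\<in>S. \<Sum>r\<in>T. if l = a \<and> r = b then f l r else (0::real)) = (\<Sum>l\<in>S. if b \<in> T then (if l = a then f l b else 0) else 0)"
    by simp
  also have "\<dots> = (if a \<in> S \<and> b \<in> T then f a b else 0)"
    by (cases "b \<in> T") (simp_all add: sum.delta[OF S])
  finally show ?thesis .
qed

definition LB :: "rpoly \<Rightarrow> nat \<times> nat \<times> nat \<times> nat \<Rightarrow> real \<Rightarrow> bool" where
  "LB p t \<alpha> \<longleftrightarrow> p \<in> poly4 \<and> (\<forall>m\<in>ks p. kap m \<le> t) \<and> lk p (mu t) = \<alpha>"

lemma LB_mult:
  assumes p: "LB p (a0,a1,a2,a3) \<alpha>" and q: "LB q (b0,b1,b2,b3) \<beta>"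
  shows "LB (p * q) (a0+b0,a1+b1,a2+b2,a3+b3) (\<alpha> * \<beta>)"
proof -
  have P4: "p \<in> poly4" "q \<in> poly4" using p q by (auto simp: LB_def)
  have key: "kap (l + r) \<le> (a0+b0,a1+b1,a2+b2,a3+b3) \<and>
      (l + r = mu (a0+b0,a1+b1,a2+b2,a3+b3) \<longleftrightarrow> l = mu (a0,a1,a2,a3) \<and> r = mu (b0,b1,b2,b3))"
    if l: "l \<in> ks p" and r: "r \<in> ks q" for l r
  proof -
    obtain x0 x1 x2 x3 where kl: "kap l = (x0,x1,x2,x3)" by (cases "kap l") auto
    obtain y0 y1 y2 y3 where kr: "kap r = (y0,y1,y2,y3)" by (cases "kap r") auto
    have le1: "(x0,x1,x2,x3) \<le> (a0,a1,a2,a3)" using p l kl by (auto simp: LB_def)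
    have le2: "(y0,y1,y2,y3) \<le> (b0,b1,b2,b3)" using q r kr by (auto simp: LB_def)
    have ml: "mu (kap l) = l" using P4(1) l by (intro mu_kap) (auto simp: poly4_iff)
    have mr: "mu (kap r) = r" using P4(2) r by (intro mu_kap) (auto simp: poly4_iff)
    have kk: "kap (l + r) = (x0+y0,x1+y1,x2+y2,x3+y3)" by (simp add: kap_add kl kr)
    have 1: "kap (l + r) \<le> (a0+b0,a1+b1,a2+b2,a3+b3)" using lex_add_le[OF le1 le2] kk by simp
    have 2: "l + r = mu (a0+b0,a1+b1,a2+b2,a3+b3) \<longleftrightarrow> l = mu (a0,a1,a2,a3) \<and> r = mu (b0,b1,b2,b3)"
    proof
      assume "l + r = mu (a0+b0,a1+b1,a2+b2,a3+b3)"
      then have "kap (l + r) = (a0+b0,a1+b1,a2+b2,a3+b3)" by simp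
      then have "kap l = (a0,a1,a2,a3) \<and> kap r = (b0,b1,b2,b3)"
        using lex_add_eq[OF le1 le2] kk kl kr by simp
      then show "l = mu (a0,a1,a2,a3) \<and> r = mu (b0,b1,b2,b3)" using ml mr by metis
    next
      assume "l = mu (a0,a1,a2,a3) \<and> r = mu (b0,b1,b2,b3)"
      then show "l + r = mu (a0+b0,a1+b1,a2+b2,a3+b3)" by (simp add: mu_add)
    qed
    show ?thesis using 1 2 by blast
  qed
  have "lk (p * q) (mu (a0+b0,a1+b1,a2+b2,a3+b3)) =
      (\<Sum>l\<in>ks p. \<Sum>r\<in>ks q. if l = mu (a0,a1,a2,a3) \<and> r = mu (b0,b1,b2,b3) then lk p l * lk q r else 0)"
    unfolding mult_expand[of p q] lookup_sum lookup_single when_def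
    by (intro sum.cong refl) (use key in auto)
  also have "\<dots> = lk p (mu (a0,a1,a2,a3)) * lk q (mu (b0,b1,b2,b3))"
    by (simp only: double_delta finite_keys) (auto simp: in_keys_iff)
  finally show ?thesis using p q key P4
    by (auto simp: LB_def dest!: keys_mult')
qed



lemma LB_add_same: "LB p t \<alpha> \<Longrightarrow> LB q t \<beta> \<Longrightarrow> LB (p + q) t (\<alpha> + \<beta>)"
  unfolding LB_def by (auto simp: lookup_add dest: subsetD[OF keys_add])

lemma LB_add_lower:
  assumes "LB p t \<alpha>" "LB q t' \<beta>" "t' < t"
  shows "LB (p + q) t \<alpha>"
proof -
  have "lk q (mu t) = 0"
  proof (rule ccontr)
    assume "lk q (mu t) \<noteq> 0"
    then have "mu t \<in> ks q" by (simp add: in_keys_iff)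
    then have "t \<le> t'" using assms(2) unfolding LB_def by force
    then show False using assms(3) by simp
  qed
  then show ?thesis using assms unfolding LB_def
    by (auto simp: lookup_add dest!: subsetD[OF keys_add])
qed

lemma keys_Const_mult: "ks (Const c * p) \<subseteq> ks p"
  by (auto simp: in_keys_iff lk_Const_mult)

lemma LB_Const_mult: "LB p t \<alpha> \<Longrightarrow> \<gamma> = c * \<alpha> \<Longrightarrow> LB (Const c * p) t \<gamma>"
  unfolding LB_def by (auto simp: lk_Const_mult dest: subsetD[OF keys_Const_mult])

lemma LB_one: "LB 1 (0,0,0,0) 1"
proof -
  have "mu (0,0,0,0) = 0" by (simp add: mu_def)
  moreover have "kap 0 = (0,0,0,0)" by (simp add: kap_def)
  ultimately show ?thesis by (simp add: LB_def)
qed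

lemma LB_mult':
  "LB p (a0,a1,a2,a3) \<alpha> \<Longrightarrow> LB q (b0,b1,b2,b3) \<beta> \<Longrightarrow> t = (a0+b0,a1+b1,a2+b2,a3+b3) \<Longrightarrow> \<gamma> = \<alpha> * \<beta>
   \<Longrightarrow> LB (p * q) t \<gamma>"
  using LB_mult by blast

lemma LB_power:
  "LB p (a0,a1,a2,a3) \<alpha> \<Longrightarrow> LB (p ^ k) (k*a0,k*a1,k*a2,k*a3) (\<alpha> ^ k)"
proof (induct k)
  case 0 then show ?case using LB_one by simp
next
  case (Suc k)
  then show ?case unfolding power_Suc by (intro LB_mult'[of p a0 a1 a2 a3 \<alpha> "p^k"]) auto
qed

lemma LB_power':
  "LB p (a0,a1,a2,a3) \<alpha> \<Longrightarrow> t = (k*a0,k*a1,k*a2,k*a3) \<Longrightarrow> \<gamma> = \<alpha> ^ k \<Longrightarrow> LB (p ^ k) t \<gamma>"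
  using LB_power by blast

lemma LB_Var_gen: "i < 4 \<Longrightarrow> LB (Var i) (kap (sng i 1)) 1"
proof -
  assume i: "i < 4"
  have "mu (kap (sng i 1)) = sng i 1" using i by (intro mu_kap) auto
  moreover have "Var i \<in> poly4" using i by simp
  ultimately show ?thesis by (simp add: LB_def Var_def)
qed

lemma LB_Var0: "LB (Var 0) (1,0,0,0) 1" using LB_Var_gen[of 0] by (simp add: kap_def lookup_single when_def)
lemma LB_Var1: "LB (Var 1) (0,1,0,0) 1" using LB_Var_gen[of 1] by (simp add: kap_def lookup_single when_def)
lemma LB_Var2: "LB (Var 2) (0,0,1,0) 1" using LB_Var_gen[of 2] by (simp add: kap_def lookup_single when_def)
lemma LB_Var3: "LB (Var 3) (0,0,0,1) 1" using LB_Var_gen[of 3] by (simp add: kap_def lookup_single when_def)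

lemmas LB_rules = LB_add_lower LB_mult' LB_power' LB_Var0 LB_Var1 LB_Var2 LB_Var3

definition U1 :: rpoly where "U1 = Var 0 ^ 2 + Var 1 ^ 2 + Var 2 ^ 2 + Var 3 ^ 2"
definition U2 :: rpoly where "U2 = Var 0 ^ 2 * Var 1 ^ 2 + Var 0 ^ 2 * Var 2 ^ 2 + Var 0 ^ 2 * Var 3 ^ 2
   + Var 1 ^ 2 * Var 2 ^ 2 + Var 1 ^ 2 * Var 3 ^ 2 + Var 2 ^ 2 * Var 3 ^ 2"
definition U3 :: rpoly where "U3 = Var 0 ^ 2 * Var 1 ^ 2 * Var 2 ^ 2 + Var 0 ^ 2 * Var 1 ^ 2 * Var 3 ^ 2
   + Var 0 ^ 2 * Var 2 ^ 2 * Var 3 ^ 2 + Var 1 ^ 2 * Var 2 ^ 2 * Var 3 ^ 2"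
definition EE :: rpoly where "EE = Var 0 * Var 1 * Var 2 * Var 3"

lemma LB_U1: "LB U1 (2,0,0,0) 1"
  unfolding U1_def by (rule LB_rules | simp)+
lemma LB_U2: "LB U2 (2,2,0,0) 1"
  unfolding U2_def by (rule LB_rules | simp)+
lemma LB_U3: "LB U3 (2,2,2,0) 1"
  unfolding U3_def by (rule LB_rules | simp)+
lemma LB_EE: "LB EE (1,1,1,1) 1"
  unfolding EE_def by (rule LB_rules | simp)+



lemma newton2: fixes a b c d :: "'a::idom"
  shows "2 * (a^2*b^2 + a^2*c^2 + a^2*d^2 + b^2*c^2 + b^2*d^2 + c^2*d^2) =
    (a^2+b^2+c^2+d^2)^2 - (a^4+b^4+c^4+d^4)"
  by algebra

lemma newton3: fixes a b c d :: "'a::idom"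
  shows "6 * (a^2*b^2*c^2 + a^2*b^2*d^2 + a^2*c^2*d^2 + b^2*c^2*d^2) =
    (a^2+b^2+c^2+d^2)^3 - 3 * (a^2+b^2+c^2+d^2) * (a^4+b^4+c^4+d^4) + 2 * (a^6+b^6+c^6+d^6)"
  by algebra

lemma rpoly_idom: "(x::rpoly) * y = 0 \<Longrightarrow> x = 0 \<or> y = 0" by simp

definition sp :: "nat \<Rightarrow> rpoly" where "sp k = (\<Sum>i\<in>{0..<4}. Var i ^ (2*k))"

lemma four: "{0..<4::nat} = {0,1,2,3}" by auto
lemma four': "{..<4::nat} = {0,1,2,3}" by auto

lemma sp_expand: "sp k = Var 0 ^ (2*k) + Var 1 ^ (2*k) + Var 2 ^ (2*k) + Var 3 ^ (2*k)"
  by (simp add: sp_def four add_ac)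

lemma U1_sp: "U1 = sp 1" by (simp add: sp_expand U1_def)
lemma U2_sp: "2 * U2 = sp 1 ^ 2 - sp 2"
  unfolding U2_def sp_expand using newton2[of "Var 0" "Var 1" "Var 2" "Var 3"]
  by (simp add: power_mult)
lemma U3_sp: "6 * U3 = sp 1 ^ 3 - 3 * sp 1 * sp 2 + 2 * sp 3"
  unfolding U3_def sp_expand using newton3[of "Var 0" "Var 1" "Var 2" "Var 3"]
  by (simp add: power_mult)
lemma EE_prod: "EE = (\<Prod>i\<in>{0..<4}. Var i)"
  by (simp add: EE_def four mult_ac)

definition wsub :: "(nat \<Rightarrow> nat) \<Rightarrow> (nat \<Rightarrow> real) \<Rightarrow> nat \<Rightarrow> rpoly" where
  "wsub \<pi> e i = Const (if i < 4 then e i else 1) * Var (\<pi> i)"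

definition winv :: "rpoly \<Rightarrow> bool" where
  "winv p \<longleftrightarrow> (\<forall>\<pi> e. \<pi> permutes {0..<4} \<and> (\<forall>i<4. e i = 1 \<or> e i = -1) \<and> (\<Prod>i<4. e i) = 1
      \<longrightarrow> subst (wsub \<pi> e) p = p)"

lemma weyl_wsub: "\<pi> permutes {0..<4} \<Longrightarrow> weyl_D4_subst \<pi> \<epsilon> = wsub \<pi> \<epsilon>"
  by (auto simp: fun_eq_iff weyl_D4_subst_def wsub_def permutes_not_in)

lemma HBSO8_iff: "p \<in> HBSO8 \<longleftrightarrow> p \<in> poly4 \<and> winv p"
  unfolding HBSO8_def winv_def weyl_D4_def by (auto simp: weyl_wsub)

lemma Const_prod: "Const (prod f S) = (\<Prod>i\<in>S. Const (f i))"
  by (induct S rule: infinite_finite_induct) (simp_all add: Const_mult)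

lemma sp_inv:
  assumes "\<pi> permutes {0..<4}" "\<forall>i<4. e i = 1 \<or> e i = -1"
  shows "subst (wsub \<pi> e) (sp k) = sp k"
proof -
  have "subst (wsub \<pi> e) (sp k) = (\<Sum>i\<in>{0..<4}. (Const (e i) * Var (\<pi> i)) ^ (2*k))"
    by (simp add: sp_def subst_sum subst_power wsub_def)
  also have "\<dots> = (\<Sum>i\<in>{0..<4}. Var (\<pi> i) ^ (2*k))"
  proof (rule sum.cong[OF refl])
    fix i assume "i \<in> {0..<4::nat}"
    then have "e i ^ 2 = 1" using assms(2) by auto
    then have "Const (e i) ^ (2*k) = 1" by (simp add: Const_power[symmetric] power_mult)
    then show "(Const (e i) * Var (\<pi> i)) ^ (2*k) = Var (\<pi> i) ^ (2*k)"
      by (simp add: power_mult_distrib)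
  qed
  also have "\<dots> = sp k"
    unfolding sp_def using sum.permute[OF assms(1), of "\<lambda>i. Var i ^ (2*k)"] by (simp add: comp_def)
  finally show ?thesis .
qed

lemma cancel_num: "(numeral n :: rpoly) * x = numeral n * y \<Longrightarrow> x = y"
proof -
  assume h: "(numeral n :: rpoly) * x = numeral n * y"
  have "Const (1 / numeral n) * Const (numeral n) = Const 1"
    by (simp only: Const_mult[symmetric]) simp
  then have c: "Const (1 / numeral n) * numeral n = (1::rpoly)" by simp
  have "x = (Const (1 / numeral n) * numeral n) * x" using c by simp
  also have "\<dots> = Const (1 / numeral n) * (numeral n * y)" by (simp only: mult.assoc h)
  also have "\<dots> = (Const (1 / numeral n) * numeral n) * y" by (simp only: mult.assoc)
  finally show "x = y" using c by simp
qed

lemma EE_inv: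
  assumes "\<pi> permutes {0..<4}" "(\<Prod>i<4. e i) = 1"
  shows "subst (wsub \<pi> e) EE = EE"
proof -
  have "subst (wsub \<pi> e) EE = (\<Prod>i\<in>{0..<4}. Const (e i) * Var (\<pi> i))"
    by (simp add: EE_prod subst_prod wsub_def)
  also have "\<dots> = Const (\<Prod>i\<in>{0..<4}. e i) * (\<Prod>i\<in>{0..<4}. Var (\<pi> i))"
    by (simp add: prod.distrib Const_prod)
  also have "(\<Prod>i\<in>{0..<4}. e i) = 1" using assms(2) by (simp add: atLeast0LessThan)
  also have "(\<Prod>i\<in>{0..<4}. Var (\<pi> i)) = EE"
    unfolding EE_prod using prod.permute[OF assms(1), of "\<lambda>i. Var i"] by (simp add: comp_def)
  finally show ?thesis by simp
qed

lemma winv_U1: "winv U1" unfolding winv_def U1_sp using sp_inv by blast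
lemma winv_U2: "winv U2" unfolding winv_def
proof (intro allI impI)
  fix \<pi> :: "nat \<Rightarrow> nat" and e :: "nat \<Rightarrow> real" assume a: "\<pi> permutes {0..<4} \<and> (\<forall>i<4. e i = 1 \<or> e i = -1) \<and> (\<Prod>i<4. e i) = 1"
  from a have a1: "\<pi> permutes {0..<4}" and a2: "\<forall>i<4. e i = 1 \<or> e i = -1" by auto
  have "subst (wsub \<pi> e) (2 * U2) = 2 * U2"
    by (simp only: U2_sp subst_simps subst_numeral sp_inv[OF a1 a2])
  then have "2 * subst (wsub \<pi> e) U2 = 2 * U2"
    by (simp only: subst_mult subst_numeral)
  then show "subst (wsub \<pi> e) U2 = U2" by (rule cancel_num)
qed
lemma winv_U3: "winv U3" unfolding winv_def
proof (intro allI impI)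
  fix \<pi> :: "nat \<Rightarrow> nat" and e :: "nat \<Rightarrow> real" assume a: "\<pi> permutes {0..<4} \<and> (\<forall>i<4. e i = 1 \<or> e i = -1) \<and> (\<Prod>i<4. e i) = 1"
  from a have a1: "\<pi> permutes {0..<4}" and a2: "\<forall>i<4. e i = 1 \<or> e i = -1" by auto
  have "subst (wsub \<pi> e) (6 * U3) = 6 * U3"
    by (simp only: U3_sp subst_simps subst_numeral sp_inv[OF a1 a2])
  then have "6 * subst (wsub \<pi> e) U3 = 6 * U3"
    by (simp only: subst_mult subst_numeral)
  then show "subst (wsub \<pi> e) U3 = U3" by (rule cancel_num)
qed
lemma winv_EE: "winv EE" unfolding winv_def using EE_inv by blast



definition G :: "nat \<Rightarrow> rpoly" where
  "G i = (if i = 0 then U1 else if i = 1 then U2 else if i = 2 then EE else if i = 3 then U3 else 0)"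

definition psi :: "rpoly \<Rightarrow> rpoly" where "psi = subst G"

lemma U_poly4: "U1 \<in> poly4" "U2 \<in> poly4" "U3 \<in> poly4" "EE \<in> poly4"
  by (simp_all add: U1_def U2_def U3_def EE_def)

lemma G_poly4: "G i \<in> poly4" by (simp add: G_def U_poly4)

lemma winv_G: "winv (G i)"
  using winv_U1 winv_U2 winv_U3 winv_EE by (simp add: G_def winv_def)

lemma psi_HBSO8: "psi q \<in> HBSO8"
proof -
  have "psi q \<in> poly4" unfolding psi_def by (rule subst_poly4) (simp add: G_poly4)
  moreover have "winv (psi q)"
    unfolding winv_def psi_def subst_comp using winv_G by (simp add: winv_def)
  ultimately show ?thesis by (simp add: HBSO8_iff)
qed

definition Ef :: "nat \<times> nat \<times> nat \<times> nat \<Rightarrow> nat \<times> nat \<times> nat \<times> nat" where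
  "Ef t = (case t of (n0,n1,n2,n3) \<Rightarrow> (2*n0+2*n1+n2+2*n3, 2*n1+n2+2*n3, n2+2*n3, n2))"

lemma Ef_inj: "Ef s = Ef t \<Longrightarrow> s = t"
  by (cases s, cases t) (auto simp: Ef_def)

lemma mn_G: assumes "ks n \<subseteq> {0..<4}"
  shows "mn G n = U1 ^ lk n 0 * U2 ^ lk n 1 * EE ^ lk n 2 * U3 ^ lk n 3"
proof -
  have "mn G n = (\<Prod>i\<in>{0..<4}. G i ^ lk n i)" by (rule mono_superset) (use assms in auto)
  then show ?thesis by (simp add: four G_def mult_ac)
qed

lemma LB_mnG: assumes "ks n \<subseteq> {0..<4}"
  shows "LB (mn G n) (Ef (kap n)) 1"
  unfolding mn_G[OF assms] Ef_def kap_def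
  by (rule LB_rules LB_U1 LB_U2 LB_U3 LB_EE | simp)+

lemma mnG_poly4: "mn G n \<in> poly4"
  unfolding mn_def by (intro poly4_prod poly4_power G_poly4)

lemma psi_sng: "psi (sng n c) = Const c * mn G n"
  by (simp add: psi_def subst_single)

lemma psi_eq: "psi q = (\<Sum>n\<in>ks q. Const (lk q n) * mn G n)"
  by (simp add: psi_def subst_mono)

lemma LB_zero_at: "LB p t \<alpha> \<Longrightarrow> t < t' \<Longrightarrow> lk p (mu t') = 0"
  unfolding LB_def by (metis in_keys_iff kap_mu leD)

lemma psi_inj0:
  assumes q: "q \<in> poly4" and z: "psi q = 0"
  shows "q = 0"
proof (rule ccontr)
  assume "q \<noteq> 0"
  then have ne: "ks q \<noteq> {}" by simp
  let ?E = "\<lambda>n. Ef (kap n)"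
  define T where "T = Max (?E ` ks q)"
  have "T \<in> ?E ` ks q" unfolding T_def using ne by (intro Max_in) auto
  then obtain n0 where n0: "n0 \<in> ks q" "?E n0 = T" by auto
  have kq: "\<And>n. n \<in> ks q \<Longrightarrow> ks n \<subseteq> {0..<4}" using q by (simp add: poly4_iff)
  have le: "\<And>n. n \<in> ks q \<Longrightarrow> ?E n \<le> T" unfolding T_def by (intro Max_ge) auto
  have uniq: "\<And>n. n \<in> ks q \<Longrightarrow> ?E n = T \<Longrightarrow> n = n0"
  proof -
    fix n assume "n \<in> ks q" "?E n = T"
    then have "kap n = kap n0" using n0 Ef_inj by metis
    then show "n = n0" using mu_kap kq \<open>n \<in> ks q\<close> n0(1) by metis
  qed
  have tm: "lk (mn G n) (mu T) = (if n = n0 then 1 else 0)" if n: "n \<in> ks q" for n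
  proof (cases "n = n0")
    case True
    then show ?thesis using LB_mnG[OF kq[OF n]] n0 by (simp add: LB_def)
  next
    case False
    then have "?E n < T" using le[OF n] uniq[OF n] by (auto simp: order.order_iff_strict)
    then show ?thesis using LB_zero_at[OF LB_mnG[OF kq[OF n]]] False by simp
  qed
  have "lk (psi q) (mu T) = (\<Sum>n\<in>ks q. lk q n * lk (mn G n) (mu T))"
    by (simp add: psi_eq lookup_sum lk_Const_mult)
  also have "\<dots> = (\<Sum>n\<in>ks q. if n = n0 then lk q n else 0)"
    by (rule sum.cong) (simp_all add: tm)
  also have "\<dots> = lk q n0" using n0(1) by simp
  finally have "lk q n0 = 0" using z by simp
  then show False using n0(1) by (simp add: in_keys_iff)
qed

lemma psi_add: "psi (p + q) = psi p + psi q" by (simp add: psi_def subst_add)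
lemma psi_mult: "psi (p * q) = psi p * psi q" by (simp add: psi_def subst_mult)
lemma psi_diff: "psi (p - q) = psi p - psi q" by (simp add: psi_def subst_diff)
lemma psi_Const: "psi (Const c) = Const c" by (simp add: psi_def)

lemma psi_inj: "inj_on psi poly4"
proof (rule inj_onI)
  fix p q assume "p \<in> poly4" "q \<in> poly4" "psi p = psi q"
  then have "psi (p - q) = 0" "p - q \<in> poly4" by (simp_all add: psi_diff)
  then have "p - q = 0" using psi_inj0 by blast
  then show "p = q" by simp
qed



lemma inv_lookup:
  assumes f: "f \<in> HBSO8" and M: "ks M \<subseteq> {0..<4}" and pi: "\<pi> permutes {0..<4}"
    and e: "\<forall>i<4. e i = 1 \<or> e i = -1" "(\<Prod>i<4. e i) = 1"
  shows "lk f (pmap \<pi> M) = lk f M * (\<Prod>k\<in>{0..<4}. e k ^ lk M k)"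
proof -
  have "subst (wsub \<pi> e) f = f" using f pi e by (simp add: HBSO8_iff winv_def)
  then have "lk f (pmap \<pi> M) = lk (subst (\<lambda>k. Const (if k < 4 then e k else 1) * Var (\<pi> k)) f) (pmap \<pi> M)"
    by (simp add: wsub_def[abs_def])
  also have "\<dots> = lk f M * (\<Prod>k\<in>ks M. (if k < 4 then e k else 1) ^ lk M k)"
    by (rule lk_subst_signed) (rule permutes_inj[OF pi])
  also have "(\<Prod>k\<in>ks M. (if k < 4 then e k else 1) ^ lk M k) = (\<Prod>k\<in>{0..<4}. (if k < 4 then e k else 1) ^ lk M k)"
    by (rule prod.mono_neutral_left) (use M in \<open>auto simp: in_keys_iff\<close>)
  also have "\<dots> = (\<Prod>k\<in>{0..<4}. e k ^ lk M k)" by (rule prod.cong) auto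
  finally show ?thesis .
qed

lemma swap_key:
  assumes f: "f \<in> HBSO8" and M: "M \<in> ks f" and ij: "i < 4" "j < 4"
  shows "lk f (pmap (Transposition.transpose i j) M) = lk f M"
    "lk (pmap (Transposition.transpose i j) M) k = lk M (Transposition.transpose i j k)"
proof -
  have KM: "ks M \<subseteq> {0..<4}" using f M by (simp add: HBSO8_iff poly4_iff)
  have p: "Transposition.transpose i j permutes {0..<4}" using ij by (intro permutes_swap_id) auto
  show "lk f (pmap (Transposition.transpose i j) M) = lk f M"
    using inv_lookup[OF f KM p, of "\<lambda>_. 1"] by simp
  have "lk (pmap (Transposition.transpose i j) M) (Transposition.transpose i j (Transposition.transpose i j k))
     = lk M (Transposition.transpose i j k)"
    by (rule lk_pmap) (rule permutes_inj[OF p])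
  then show "lk (pmap (Transposition.transpose i j) M) k = lk M (Transposition.transpose i j k)" by simp
qed

lemma sign_key:
  assumes f: "f \<in> HBSO8" and M: "M \<in> ks f"
  shows "even (lk M 0 + lk M 1)" "even (lk M 1 + lk M 2)" "even (lk M 2 + lk M 3)"
proof -
  have KM: "ks M \<subseteq> {0..<4}" using f M by (simp add: HBSO8_iff poly4_iff)
  have p: "(\<lambda>k. k) permutes {0..<4}" by (simp add: permutes_def)
  have nz: "lk f M \<noteq> 0" using M by (simp add: in_keys_iff)
  have gen: "even (lk M i + lk M j)" if ij: "i < 4" "j < 4" "i \<noteq> j" for i j
  proof -
    define e where "e = (\<lambda>k::nat. if k = i \<or> k = j then -1 else (1::real))"
    have e1: "\<forall>k<4. e k = 1 \<or> e k = -1" by (simp add: e_def)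
    have "(\<Prod>k<4. e k) = (\<Prod>k\<in>{0,1,2,3}. e k)" by (simp add: four')
    also have "\<dots> = 1" using ij unfolding e_def
      by (cases "i = 0"; cases "i = 1"; cases "i = 2"; cases "j = 0"; cases "j = 1"; cases "j = 2") auto
    finally have e2: "(\<Prod>k<4. e k) = 1" .
    have "lk f M = lk f M * (\<Prod>k\<in>{0..<4}. e k ^ lk M k)"
      using inv_lookup[OF f KM p e1 e2] by (simp add: pmap_id)
    then have "(\<Prod>k\<in>{0..<4}. e k ^ lk M k) = 1" using nz by simp
    also have "(\<Prod>k\<in>{0..<4}. e k ^ lk M k) = (\<Prod>k\<in>{0..<4}. if k = i \<or> k = j then (-1) ^ lk M k else 1)"
      by (rule prod.cong) (auto simp: e_def)
    also have "\<dots> = (\<Prod>k\<in>{i,j}. (-1::real) ^ lk M k)"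
    proof -
      have "{0..<4} \<inter> {x. x = i \<or> x = j} = {i, j}" using ij by auto
      then show ?thesis by (subst prod.If_cases) simp_all
    qed
    also have "\<dots> = (-1) ^ (lk M i + lk M j)" using ij by (simp add: power_add)
    finally show ?thesis by (simp add: minus_one_power_iff split: if_splits)
  qed
  show "even (lk M 0 + lk M 1)" "even (lk M 1 + lk M 2)" "even (lk M 2 + lk M 3)"
    by (rule gen; simp)+
qed



lemma HBSO8_comb: "p \<in> HBSO8 \<Longrightarrow> q \<in> HBSO8 \<Longrightarrow> p - Const c * q \<in> HBSO8"
  by (simp add: HBSO8_iff winv_def subst_diff subst_mult)

lemma sorted_key:
  assumes f: "f \<in> HBSO8" and M: "M \<in> ks f" and mx: "\<forall>m\<in>ks f. kap m \<le> kap M"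
  shows "lk M 1 \<le> lk M 0" "lk M 2 \<le> lk M 1" "lk M 3 \<le> lk M 2"
proof -
  have gen: "lk M (Suc i) \<le> lk M i" if i: "i < 3" for i
  proof (rule ccontr)
    assume lt: "\<not> lk M (Suc i) \<le> lk M i"
    let ?M' = "pmap (Transposition.transpose i (Suc i)) M"
    have "lk f ?M' = lk f M" using swap_key(1)[OF f M, of i "Suc i"] i by simp
    then have "?M' \<in> ks f" using M by (simp add: in_keys_iff)
    then have le: "kap ?M' \<le> kap M" using mx by blast
    have lkM': "\<And>k. lk ?M' k = lk M (Transposition.transpose i (Suc i) k)"
      using swap_key(2)[OF f M, of i "Suc i"] i by simp
    have "i = 0 \<or> i = 1 \<or> i = 2" using i by auto
    then show False using le lt by (auto simp: kap_def lkM')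
  qed
  show "lk M 1 \<le> lk M 0" "lk M 2 \<le> lk M 1" "lk M 3 \<le> lk M 2"
    using gen[of 0] gen[of 1] gen[of 2] by (simp_all add: numeral_eq_Suc)
qed

lemma psi_zero: "psi 0 = 0" by (simp add: psi_def)

lemma surj_aux: "\<forall>f. f \<in> HBSO8 \<longrightarrow> (\<forall>m\<in>ks f. kap m \<le> a) \<longrightarrow> (\<exists>q\<in>poly4. psi q = f)"
proof (induct a rule: less_induct)
  case (less a)
  show ?case
  proof (intro allI impI)
    fix f assume f: "f \<in> HBSO8" and bd: "\<forall>m\<in>ks f. kap m \<le> a"
    show "\<exists>q\<in>poly4. psi q = f"
    proof (cases "f = 0")
      case True
      then show ?thesis using psi_zero by (intro bexI[of _ 0]) simp_all
    next
      case False
      then have ne: "ks f \<noteq> {}" by simp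
      define A where "A = Max (kap ` ks f)"
      have "A \<in> kap ` ks f" unfolding A_def using ne by (intro Max_in) auto
      then obtain M where M: "M \<in> ks f" "kap M = A" by auto
      have mx: "\<forall>m\<in>ks f. kap m \<le> kap M" unfolding M(2) A_def by simp
      have Aa: "A \<le> a" using bd M by auto
      have KM: "ks M \<subseteq> {0..<4}" using f M by (simp add: HBSO8_iff poly4_iff)
      obtain a0 a1 a2 a3 where A4: "A = (a0,a1,a2,a3)" by (cases A) auto
      have lks: "lk M 0 = a0" "lk M 1 = a1" "lk M 2 = a2" "lk M 3 = a3"
        using M(2) A4 by (simp_all add: kap_def)
      have srt: "a1 \<le> a0" "a2 \<le> a1" "a3 \<le> a2" using sorted_key[OF f M(1) mx] lks by simp_all
      have ev: "even (a0 + a1)" "even (a1 + a2)" "even (a2 + a3)" using sign_key[OF f M(1)] lks by simp_all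
      define N where "N = mu ((a0 - a1) div 2, (a1 - a2) div 2, a3, (a2 - a3) div 2)"
      have KN: "ks N \<subseteq> {0..<4}" by (auto simp: N_def mu_def split: if_splits dest!: subsetD[OF keys_add])
      have EN: "Ef (kap N) = A"
        unfolding N_def kap_mu A4 Ef_def using srt ev by auto
      have LBg: "LB (mn G N) A 1" using LB_mnG[OF KN] EN by simp
      have gH: "mn G N \<in> HBSO8" using psi_HBSO8[of "sng N 1"] by (simp add: psi_sng)
      define c where "c = lk f M"
      define f' where "f' = f - Const c * mn G N"
      have f'H: "f' \<in> HBSO8" unfolding f'_def using f gH by (rule HBSO8_comb)
      have muA: "mu A = M" using M(2) mu_kap[OF KM] by simp
      have lkA: "lk f' (mu A) = 0"
        using LBg by (simp add: f'_def lookup_minus lk_Const_mult c_def muA LB_def)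
      have lt: "\<forall>m\<in>ks f'. kap m < A"
      proof
        fix m assume m: "m \<in> ks f'"
        have "m \<in> ks f \<or> m \<in> ks (mn G N)"
          using m keys_diff'[of f "Const c * mn G N"] keys_Const_mult[of c "mn G N"]
          unfolding f'_def by blast
        then have le: "kap m \<le> A" using mx M(2) LBg by (auto simp: LB_def)
        have "kap m \<noteq> A"
        proof
          assume "kap m = A"
          moreover have "ks m \<subseteq> {0..<4}" using f'H m by (simp add: HBSO8_iff poly4_iff)
          ultimately have "m = mu A" using mu_kap by metis
          then show False using m lkA by (simp add: in_keys_iff)
        qed
        then show "kap m < A" using le by simp
      qed
      obtain q' where q': "q' \<in> poly4" "psi q' = f'"
      proof (cases "f' = 0")
        case True
        then show ?thesis using that[of 0] psi_zero by simp
      next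
        case False
        define b where "b = Max (kap ` ks f')"
        have "b \<in> kap ` ks f'" unfolding b_def using False by (intro Max_in) auto
        then have "b < A" using lt by auto
        then have "b < a" using Aa by simp
        moreover have "\<forall>m\<in>ks f'. kap m \<le> b" unfolding b_def by simp
        ultimately show ?thesis using less f'H that by blast
      qed
      have "Const c * sng N 1 \<in> poly4"
        using KN by (intro poly4_mult poly4_Const) (simp add: poly4_iff)
      moreover have "psi (q' + Const c * sng N 1) = f"
        using q' by (simp add: psi_add psi_mult psi_Const psi_sng f'_def)
      ultimately show ?thesis using q' by (intro bexI[of _ "q' + Const c * sng N 1"]) simp_all
    qed
  qed
qed

lemma psi_surj: "f \<in> HBSO8 \<Longrightarrow> \<exists>q\<in>poly4. psi q = f"
  using surj_aux[of "Max (kap ` ks f)"] by simp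

lemma psi_bij: "bij_betw psi poly4 HBSO8"
  unfolding bij_betw_def using psi_inj psi_HBSO8 psi_surj by auto



abbreviation hh :: rpoly where "hh \<equiv> Const (1/2)"

lemma h2: "2 * hh = 1"
proof -
  have "Const 2 * Const (1/2) = Const 1" by (simp only: Const_mult[symmetric]) simp
  then show ?thesis by simp
qed

lemma tL0: "triality_L 0 = hh * (Var 0 + Var 1 + Var 2 + Var 3)" by (simp add: triality_L_def)
lemma tL1: "triality_L 1 = hh * (Var 0 + Var 1 - Var 2 - Var 3)" by (simp add: triality_L_def)
lemma tL2: "triality_L 2 = hh * (Var 0 - Var 1 + Var 2 - Var 3)" by (simp add: triality_L_def)
lemma tL3: "triality_L 3 = hh * (- Var 0 + Var 1 + Var 2 - Var 3)" by (simp add: triality_L_def)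

lemma gT1: fixes h :: "'a::idom" and x :: "nat \<Rightarrow> 'a"
  assumes h: "2*h = 1"
  shows "(h*(x 0 + x 1 + x 2 + x 3))^2 + (h*(x 0 + x 1 - x 2 - x 3))^2 + (h*(x 0 - x 1 + x 2 - x 3))^2
     + (h*(- x 0 + x 1 + x 2 - x 3))^2 = x 0^2 + x 1^2 + x 2^2 + x 3^2"
  using h by algebra

lemma gT2: fixes h :: "'a::idom" and x :: "nat \<Rightarrow> 'a"
  assumes h: "2*h = 1"
  shows "(h*(x 0 + x 1 + x 2 + x 3))^2 * (h*(x 0 + x 1 - x 2 - x 3))^2
     + (h*(x 0 + x 1 + x 2 + x 3))^2 * (h*(x 0 - x 1 + x 2 - x 3))^2
     + (h*(x 0 + x 1 + x 2 + x 3))^2 * (h*(- x 0 + x 1 + x 2 - x 3))^2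
     + (h*(x 0 + x 1 - x 2 - x 3))^2 * (h*(x 0 - x 1 + x 2 - x 3))^2
     + (h*(x 0 + x 1 - x 2 - x 3))^2 * (h*(- x 0 + x 1 + x 2 - x 3))^2
     + (h*(x 0 - x 1 + x 2 - x 3))^2 * (h*(- x 0 + x 1 + x 2 - x 3))^2
   = 3 * h^3 * (x 0^2 + x 1^2 + x 2^2 + x 3^2)^2
     - h * (x 0^2*x 1^2 + x 0^2*x 2^2 + x 0^2*x 3^2 + x 1^2*x 2^2 + x 1^2*x 3^2 + x 2^2*x 3^2)
     - 3 * (x 0 * x 1 * x 2 * x 3)"
  using h by algebra

lemma gTE: fixes h :: "'a::idom" and x :: "nat \<Rightarrow> 'a"
  assumes h: "2*h = 1"
  shows "h*(x 0 + x 1 + x 2 + x 3) * (h*(x 0 + x 1 - x 2 - x 3)) * (h*(x 0 - x 1 + x 2 - x 3))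
     * (h*(- x 0 + x 1 + x 2 - x 3))
   = - (h^4 * (x 0^2 + x 1^2 + x 2^2 + x 3^2)^2)
     + h^2 * (x 0^2*x 1^2 + x 0^2*x 2^2 + x 0^2*x 3^2 + x 1^2*x 2^2 + x 1^2*x 3^2 + x 2^2*x 3^2)
     - h * (x 0 * x 1 * x 2 * x 3)"
  using h by algebra

lemma gT3: fixes h :: "'a::idom" and x :: "nat \<Rightarrow> 'a"
  assumes h: "2*h = 1"
  shows "(h*(x 0 + x 1 + x 2 + x 3))^2 * (h*(x 0 + x 1 - x 2 - x 3))^2 * (h*(x 0 - x 1 + x 2 - x 3))^2
     + (h*(x 0 + x 1 + x 2 + x 3))^2 * (h*(x 0 + x 1 - x 2 - x 3))^2 * (h*(- x 0 + x 1 + x 2 - x 3))^2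
     + (h*(x 0 + x 1 + x 2 + x 3))^2 * (h*(x 0 - x 1 + x 2 - x 3))^2 * (h*(- x 0 + x 1 + x 2 - x 3))^2
     + (h*(x 0 + x 1 - x 2 - x 3))^2 * (h*(x 0 - x 1 + x 2 - x 3))^2 * (h*(- x 0 + x 1 + x 2 - x 3))^2
   = h^4 * (x 0^2 + x 1^2 + x 2^2 + x 3^2)^3
     - h^2 * (x 0^2 + x 1^2 + x 2^2 + x 3^2) * (x 0^2*x 1^2 + x 0^2*x 2^2 + x 0^2*x 3^2 + x 1^2*x 2^2 + x 1^2*x 3^2 + x 2^2*x 3^2)
     - h * (x 0^2 + x 1^2 + x 2^2 + x 3^2) * (x 0 * x 1 * x 2 * x 3)
     + (x 0^2*x 1^2*x 2^2 + x 0^2*x 1^2*x 3^2 + x 0^2*x 2^2*x 3^2 + x 1^2*x 2^2*x 3^2)"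
  using h by algebra

lemma T_U1: "triality_H U1 = U1"
  unfolding triality_H_def U1_def subst_simps subst_Var tL0 tL1 tL2 tL3
  by (rule gT1[of hh Var, OF h2])

lemma T_U2: "triality_H U2 = 3 * hh^3 * U1^2 - hh * U2 - 3 * EE"
  unfolding triality_H_def U1_def U2_def EE_def subst_simps subst_Var tL0 tL1 tL2 tL3
  by (rule gT2[of hh Var, OF h2])

lemma T_EE: "triality_H EE = - (hh^4 * U1^2) + hh^2 * U2 - hh * EE"
  unfolding triality_H_def U1_def U2_def EE_def subst_simps subst_Var tL0 tL1 tL2 tL3
  by (rule gTE[of hh Var, OF h2])

lemma T_U3: "triality_H U3 = hh^4 * U1^3 - hh^2 * U1 * U2 - hh * U1 * EE + U3"
  unfolding triality_H_def U1_def U2_def U3_def EE_def subst_simps subst_Var tL0 tL1 tL2 tL3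
  by (rule gT3[of hh Var, OF h2])



abbreviation rr :: rpoly where "rr \<equiv> Const (sqrt 3)"
abbreviation ri :: rpoly where "ri \<equiv> Const (1 / sqrt 3)"
abbreviation kk :: rpoly where "kk \<equiv> Const (1/6)"

lemma r2: "rr * rr = 3"
proof -
  have "Const (sqrt 3) * Const (sqrt 3) = Const 3" by (simp only: Const_mult[symmetric]) simp
  then show ?thesis by simp
qed
lemma rri: "rr * ri = 1"
proof -
  have "Const (sqrt 3) * Const (1 / sqrt 3) = Const 1" by (simp only: Const_mult[symmetric]) simp
  then show ?thesis by simp
qed
lemma k6: "6 * kk = 1"
proof -
  have "Const 6 * Const (1/6) = Const 1" by (simp only: Const_mult[symmetric]) simp
  then show ?thesis by simp
qed

definition R :: "nat \<Rightarrow> rpoly" where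
  "R i = (if i = 0 then Var 0
     else if i = 1 then 3 * hh^3 * Var 0^2 - hh * Var 1 - 3 * Var 2
     else if i = 2 then - (hh^4 * Var 0^2) + hh^2 * Var 1 - hh * Var 2
     else if i = 3 then hh^4 * Var 0^3 - hh^2 * Var 0 * Var 1 - hh * Var 0 * Var 2 + Var 3
     else Var i)"

definition Am :: "nat \<Rightarrow> rpoly" where
  "Am i = (if i = 0 then Var 0
     else if i = 1 then rr * Var 2
     else if i = 2 then hh * Var 1 - hh^3 * Var 0^2
     else if i = 3 then Var 3 - kk * Var 0 * Var 1
     else Var i)"

definition Bm :: "nat \<Rightarrow> rpoly" where
  "Bm i = (if i = 0 then Var 0
     else if i = 1 then 2 * Var 2 + hh^2 * Var 0^2
     else if i = 2 then ri * Var 1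
     else if i = 3 then Var 3 + kk * Var 0 * (2 * Var 2 + hh^2 * Var 0^2)
     else Var i)"

lemma cases4: "(i::nat) = 0 \<or> i = 1 \<or> i = 2 \<or> i = 3 \<or> i \<ge> 4" by auto

lemma TH0: "triality_H 0 = 0" by (simp add: triality_H_def)

lemma T_G: "triality_H (G i) = psi (R i)"
  using cases4[of i]
  by (auto simp: G_def R_def psi_def subst_simps T_U1 T_U2 T_U3 T_EE TH0)

lemma AB: "subst Am (Bm i) = Var i"
proof -
  have "subst Am (Bm 1) = Var 1"
    by (simp add: Am_def Bm_def subst_simps) (use h2 in algebra)?
  moreover have "subst Am (Bm 2) = Var 2"
    by (simp add: Am_def Bm_def subst_simps) (use rri in algebra)
  moreover have "subst Am (Bm 3) = Var 3"
    by (simp add: Am_def Bm_def subst_simps) (use h2 in algebra)?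
  ultimately show ?thesis using cases4[of i] by (auto simp: Am_def Bm_def)
qed

lemma BA: "subst Bm (Am i) = Var i"
proof -
  have "subst Bm (Am 1) = Var 1"
    by (simp add: Am_def Bm_def subst_simps) (use rri in algebra)
  moreover have "subst Bm (Am 2) = Var 2"
    by (simp add: Am_def Bm_def subst_simps) (use h2 in algebra)?
  moreover have "subst Bm (Am 3) = Var 3"
    by (simp add: Am_def Bm_def subst_simps) (use h2 in algebra)?
  ultimately show ?thesis using cases4[of i] by (auto simp: Am_def Bm_def)
qed

lemma Rot_vals:
  "triality_abcd_var 1 = - hh * Var 1 + rr * hh * Var 2"
  "triality_abcd_var 2 = - (rr * hh) * Var 1 - hh * Var 2"
proof -
  have c: "Const (cos (2*pi/3)) = - hh" by (simp add: cos_120 Const_minus)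
  have s: "Const (sin (2*pi/3)) = rr * hh" by (simp add: sin_120 Const_mult[symmetric])
  have s': "Const (- sin (2*pi/3)) = - (rr * hh)" by (simp add: Const_minus s)
  show "triality_abcd_var 1 = - hh * Var 1 + rr * hh * Var 2"
    by (simp add: triality_abcd_var_def c s)
  show "triality_abcd_var 2 = - (rr * hh) * Var 1 - hh * Var 2"
    by (simp add: triality_abcd_var_def c s')
qed

lemma RA: "subst R (Am i) = subst Am (triality_abcd_var i)"
proof -
  have "subst R (Am 1) = subst Am (triality_abcd_var 1)"
    unfolding Rot_vals by (simp add: Am_def R_def subst_simps) algebra
  moreover have "subst R (Am 2) = subst Am (triality_abcd_var 2)"
    unfolding Rot_vals by (simp add: Am_def R_def subst_simps) (use h2 r2 in algebra)
  moreover have "subst R (Am 3) = subst Am (triality_abcd_var 3)"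
    by (simp add: Am_def R_def subst_simps triality_abcd_var_def) (use h2 k6 in algebra)
  ultimately show ?thesis using cases4[of i]
    by (auto simp: Am_def R_def triality_abcd_var_def)
qed



lemma dscale_add: "dscale (p + q) = dscale p + dscale q" by (simp add: dscale_def subst_add)
lemma dscale_diff: "dscale (p - q) = dscale p - dscale q" by (simp add: dscale_def subst_diff)
lemma dscale_mult: "dscale (p * q) = dscale p * dscale q" by (simp add: dscale_def subst_mult)
lemma dscale_power: "dscale (p ^ n) = dscale p ^ n" by (simp add: dscale_def subst_power)
lemma dscale_Const: "dscale (Const c) = Const c" by (simp add: dscale_def)
lemma dscale_num: "dscale (numeral n) = numeral n" by (simp add: dscale_def)
lemma dscale_zero: "dscale 0 = 0" by (simp add: dscale_def)

lemma dscale_U1: "dscale U1 = 4 * U1"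
  unfolding dscale_def U1_def subst_simps subst_Var Const_numeral by algebra
lemma dscale_U2: "dscale U2 = 16 * U2"
  unfolding dscale_def U2_def subst_simps subst_Var Const_numeral by algebra
lemma dscale_U3: "dscale U3 = 64 * U3"
  unfolding dscale_def U3_def subst_simps subst_Var Const_numeral by algebra
lemma dscale_EE: "dscale EE = 16 * EE"
  unfolding dscale_def EE_def subst_simps subst_Var Const_numeral by algebra

lemma psi_Am:
  "psi (Am 0) = U1" "psi (Am 1) = rr * EE" "psi (Am 2) = hh * U2 - hh^3 * U1^2"
  "psi (Am 3) = U3 - kk * U1 * U2" "i \<ge> 4 \<Longrightarrow> psi (Am i) = 0"
  by (simp_all add: psi_def Am_def G_def subst_simps)

lemma dscale_GA: "dscale (psi (Am i)) = Const (4 ^ abcd_weight i) * psi (Am i)"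
proof -
  have "dscale (psi (Am 0)) = Const (4 ^ abcd_weight 0) * psi (Am 0)"
    by (simp add: psi_Am dscale_U1 abcd_weight_def)
  moreover have "dscale (psi (Am 1)) = Const (4 ^ abcd_weight 1) * psi (Am 1)"
    unfolding psi_Am by (simp add: dscale_mult dscale_Const dscale_EE abcd_weight_def mult_ac)
  moreover have "dscale (psi (Am 2)) = Const (4 ^ abcd_weight 2) * psi (Am 2)"
    by (simp add: psi_Am dscale_mult dscale_diff dscale_power dscale_Const dscale_U1 dscale_U2 abcd_weight_def)
       (algebra)?
  moreover have "dscale (psi (Am 3)) = Const (4 ^ abcd_weight 3) * psi (Am 3)"
    by (simp add: psi_Am dscale_mult dscale_diff dscale_Const dscale_U1 dscale_U2 dscale_U3 abcd_weight_def)
       (algebra)?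
  moreover have "i \<ge> 4 \<Longrightarrow> dscale (psi (Am i)) = Const (4 ^ abcd_weight i) * psi (Am i)"
    by (simp add: psi_Am dscale_zero)
  ultimately show ?thesis using cases4[of i] by auto
qed

definition Psi :: "rpoly \<Rightarrow> rpoly" where "Psi q = psi (subst Am q)"

lemma Psi_subst: "Psi q = subst (\<lambda>i. psi (Am i)) q"
  by (simp add: Psi_def psi_def subst_comp)

lemma Psi_add: "Psi (p + q) = Psi p + Psi q" by (simp add: Psi_subst subst_add)
lemma Psi_mult: "Psi (p * q) = Psi p * Psi q" by (simp add: Psi_subst subst_mult)
lemma Psi_Const: "Psi (Const c) = Const c" by (simp add: Psi_subst)

lemma Psi_dscale: "dscale (Psi q) = Psi (wscale q)"
proof -
  have "dscale (Psi q) = subst (\<lambda>i. dscale (psi (Am i))) q"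
    unfolding Psi_subst dscale_def subst_comp ..
  also have "\<dots> = subst (\<lambda>i. Const (4 ^ abcd_weight i) * psi (Am i)) q"
    by (simp only: dscale_GA)
  also have "\<dots> = Psi (wscale q)"
    unfolding Psi_subst wscale_def subst_comp by (simp add: subst_mult)
  finally show ?thesis .
qed

lemma Psi_T: "triality_H (Psi q) = Psi (triality_abcd q)"
proof -
  have "triality_H (Psi q) = subst (\<lambda>i. triality_H (G i)) (subst Am q)"
    unfolding Psi_def psi_def triality_H_def subst_comp ..
  also have "\<dots> = subst (\<lambda>i. psi (R i)) (subst Am q)" by (simp only: T_G)
  also have "\<dots> = psi (subst R (subst Am q))" unfolding psi_def subst_comp ..
  also have "subst R (subst Am q) = subst (\<lambda>i. subst R (Am i)) q" by (rule subst_comp)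
  also have "\<dots> = subst (\<lambda>i. subst Am (triality_abcd_var i)) q" by (simp only: RA)
  also have "\<dots> = subst Am (triality_abcd q)" unfolding triality_abcd_def subst_comp ..
  finally show ?thesis by (simp add: Psi_def)
qed

lemma Am_poly4: "i < 4 \<Longrightarrow> Am i \<in> poly4" using cases4[of i] by (auto simp: Am_def)
lemma Bm_poly4: "i < 4 \<Longrightarrow> Bm i \<in> poly4" using cases4[of i] by (auto simp: Bm_def)
lemma Rot_poly4: "i < 4 \<Longrightarrow> triality_abcd_var i \<in> poly4"
  using cases4[of i] by (auto simp: triality_abcd_var_def)

lemma subst_poly4': "q \<in> poly4 \<Longrightarrow> (\<And>i. i < 4 \<Longrightarrow> s i \<in> poly4) \<Longrightarrow> subst s q \<in> poly4"
  by (rule subst_poly4) (auto dest: vars_poly4)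

lemma Am_bij: "bij_betw (subst Am) poly4 poly4"
proof (rule bij_betw_byWitness[where f' = "subst Bm"])
  show "\<forall>a\<in>poly4. subst Bm (subst Am a) = a"
    by (simp add: subst_comp BA subst_Var_id[unfolded fun_eq_iff] )
  show "\<forall>a\<in>poly4. subst Am (subst Bm a) = a"
    by (simp add: subst_comp AB subst_Var_id)
  show "subst Am ` poly4 \<subseteq> poly4" by (auto intro: subst_poly4' Am_poly4)
  show "subst Bm ` poly4 \<subseteq> poly4" by (auto intro: subst_poly4' Bm_poly4)
qed

lemma Psi_bij: "bij_betw Psi poly4 HBSO8"
proof -
  have "bij_betw (psi \<circ> subst Am) poly4 HBSO8" by (rule bij_betw_trans[OF Am_bij psi_bij])
  then show ?thesis by (simp add: Psi_def[abs_def] comp_def)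
qed

theorem mainTheorem8:
  shows "\<exists>\<Phi> :: rpoly \<Rightarrow> rpoly.
     bij_betw \<Phi> HBSO8 poly4 \<and>
     (\<forall>p\<in>HBSO8. \<forall>q\<in>HBSO8. \<Phi> (p + q) = \<Phi> p + \<Phi> q) \<and>
     (\<forall>p\<in>HBSO8. \<forall>q\<in>HBSO8. \<Phi> (p * q) = \<Phi> p * \<Phi> q) \<and>
     (\<forall>c. \<Phi> (Const c) = Const c) \<and>
     (\<forall>p\<in>HBSO8. \<forall>k. H_graded k p \<longleftrightarrow> whomog k (\<Phi> p)) \<and>
     (\<forall>p\<in>HBSO8. \<Phi> (triality_H p) = triality_abcd (\<Phi> p))"
proof -
  define \<Phi> where "\<Phi> = the_inv_into poly4 Psi"
  have inj: "inj_on Psi poly4" using Psi_bij by (simp add: bij_betw_def)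
  have bij: "bij_betw \<Phi> HBSO8 poly4" unfolding \<Phi>_def by (rule bij_betw_the_inv_into[OF Psi_bij])
  have in4: "\<And>p. p \<in> HBSO8 \<Longrightarrow> \<Phi> p \<in> poly4" using bij by (auto simp: bij_betw_def)
  have PP: "\<And>p. p \<in> HBSO8 \<Longrightarrow> Psi (\<Phi> p) = p"
    unfolding \<Phi>_def by (rule f_the_inv_into_f_bij_betw[OF Psi_bij])
  have PhiPsi: "\<And>q. q \<in> poly4 \<Longrightarrow> \<Phi> (Psi q) = q"
    unfolding \<Phi>_def by (rule the_inv_into_f_f[OF inj])
  have add: "\<forall>p\<in>HBSO8. \<forall>q\<in>HBSO8. \<Phi> (p + q) = \<Phi> p + \<Phi> q"
  proof (intro ballI)
    fix p q assume p: "p \<in> HBSO8" and q: "q \<in> HBSO8"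
    have "\<Phi> (p + q) = \<Phi> (Psi (\<Phi> p + \<Phi> q))" using PP p q by (simp add: Psi_add)
    then show "\<Phi> (p + q) = \<Phi> p + \<Phi> q" using PhiPsi in4 p q by simp
  qed
  have mult: "\<forall>p\<in>HBSO8. \<forall>q\<in>HBSO8. \<Phi> (p * q) = \<Phi> p * \<Phi> q"
  proof (intro ballI)
    fix p q assume p: "p \<in> HBSO8" and q: "q \<in> HBSO8"
    have "\<Phi> (p * q) = \<Phi> (Psi (\<Phi> p * \<Phi> q))" using PP p q by (simp add: Psi_mult)
    then show "\<Phi> (p * q) = \<Phi> p * \<Phi> q" using PhiPsi in4 p q by simp
  qed
  have const: "\<forall>c. \<Phi> (Const c) = Const c"
    using PhiPsi[of "Const _"] by (simp add: Psi_Const)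
  have grad: "\<forall>p\<in>HBSO8. \<forall>k. H_graded k p \<longleftrightarrow> whomog k (\<Phi> p)"
  proof (intro ballI allI)
    fix p k assume p: "p \<in> HBSO8"
    define q where "q = \<Phi> p"
    have q4: "q \<in> poly4" and pq: "p = Psi q" using in4 PP p by (auto simp: q_def)
    have w4: "wscale q \<in> poly4" unfolding wscale_def
      by (rule subst_poly4'[OF q4]) simp
    have c4: "Const (4 ^ k) * q \<in> poly4" using q4 by simp
    have "H_graded k p \<longleftrightarrow> dscale (Psi q) = Const (2 ^ (2 * k)) * Psi q"
      by (simp add: H_graded_def homog_iff pq)
    also have "\<dots> \<longleftrightarrow> Psi (wscale q) = Psi (Const (4 ^ k) * q)"
      by (simp add: Psi_dscale Psi_mult Psi_Const power_mult)
    also have "\<dots> \<longleftrightarrow> wscale q = Const (4 ^ k) * q"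
      using inj w4 c4 by (auto dest: inj_onD)
    also have "\<dots> \<longleftrightarrow> whomog k q" by (simp add: whomog_iff)
    finally show "H_graded k p \<longleftrightarrow> whomog k (\<Phi> p)" by (simp add: q_def)
  qed
  have tri: "\<forall>p\<in>HBSO8. \<Phi> (triality_H p) = triality_abcd (\<Phi> p)"
  proof
    fix p assume p: "p \<in> HBSO8"
    have T4: "triality_abcd (\<Phi> p) \<in> poly4" unfolding triality_abcd_def
      by (rule subst_poly4'[OF in4[OF p] Rot_poly4])
    have "\<Phi> (triality_H p) = \<Phi> (Psi (triality_abcd (\<Phi> p)))"
      using PP[OF p] Psi_T[of "\<Phi> p"] by simp
    then show "\<Phi> (triality_H p) = triality_abcd (\<Phi> p)" using PhiPsi[OF T4] by simp
  qed
  show ?thesis using bij add mult const grad tri by blast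
qed

end
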